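(* Let $D$ be an integral domain with quotient field $K$, $n\ge1$, and $f\in(T_n(K))[x]$. Then $f(C)\in T_n(D)$ for all $C\in T_n(D)$ if and only if $f_{ij}\in\mathrm{Int}_K(T_{n-j+1}(D))$ for all $1\le i\le j\le n$; and $f(C)_\ell\in T_n(D)$ for all $C\in T_n(D)$ if and only if $f_{ij}\in\mathrm{Int}_K(T_i(D))$ for all $1\le i\le j\le n$. Equivalently, under the identification of $(T_n(K))[x]$ with $T_n(K[x])$ via $f\mapsto(f_{ij})$, $\mathrm{Int}_{T_n(K)}(T_n(D))$ is the set of upper triangular matrices whose $(i,j)$-entry ($i\le j$) lies in $\mathrm{Int}_K(T_{n-j+1}(D))$, and $\mathrm{Int}^{\ell}_{T_n(K)}(T_n(D))$ is the set of upper triangular matrices whose $(i,j)$-entry ($i\le j$) lies in $\mathrm{Int}_K(T_i(D))$.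
   Context: $T_n(A)$ denotes the ring of upper triangular $n\times n$ matrices over a ring $A$. For $f=\sum_k F_kx^k\in(T_n(K))[x]$ with $F_k\in T_n(K)$, right substitution is $f(C)=\sum_kF_kC^k$ and left substitution is $f(C)_\ell=\sum_kC^kF_k$. Writing $f_{ij}^{(k)}$ for the $(i,j)$-entry of $F_k$, set $f_{ij}=\sum_k f_{ij}^{(k)}x^k\in K[x]$; the map $f\mapsto(f_{ij})$ is a ring isomorphism $(T_n(K))[x]\to T_n(K[x])$. For $m\ge1$, $\mathrm{Int}_K(T_m(D))=\{g\in K[x]\mid\forall C\in T_m(D):\ g(C)\in T_m(D)\}$ (usual evaluation). $\mathrm{Int}_{T_n(K)}(T_n(D))=\{f\in(T_n(K))[x]\mid\forall C\in T_n(D):\ f(C)\in T_n(D)\}$ and $\mathrm{Int}^{\ell}_{T_n(K)}(T_n(D))=\{f\in(T_n(K))[x]\mid\forall C\in T_n(D):\ f(C)_\ell\in T_n(D)\}$. *)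

theory Defs
  imports "HOL-Computational_Algebra.Polynomial"
begin

text \<open>Matrices are functions nat => nat => 'a, indices 0-based (paper index i corresponds to i-1 here);
  an m x m matrix is represented canonically: entries outside {0..<m}^2 are 0.\<close>

type_synonym 'a sqmat = "nat \<Rightarrow> nat \<Rightarrow> 'a"

definition tri :: "nat \<Rightarrow> 'a::zero set \<Rightarrow> 'a sqmat set" where
  "tri m S = {A. (\<forall>i j. A i j \<noteq> 0 \<longrightarrow> i \<le> j \<and> j < m) \<and> (\<forall>i j. i \<le> j \<and> j < m \<longrightarrow> A i j \<in> S)}"

definition mmul :: "nat \<Rightarrow> 'a::comm_ring_1 sqmat \<Rightarrow> 'a sqmat \<Rightarrow> 'a sqmat" where
  "mmul m A B = (\<lambda>i j. \<Sum>l<m. A i l * B l j)"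

definition mone :: "nat \<Rightarrow> 'a::comm_ring_1 sqmat" where
  "mone m = (\<lambda>i j. if i = j \<and> i < m then 1 else 0)"

fun mpow :: "nat \<Rightarrow> 'a::comm_ring_1 sqmat \<Rightarrow> nat \<Rightarrow> 'a sqmat" where
  "mpow m C 0 = mone m"
| "mpow m C (Suc k) = mmul m (mpow m C k) C"

definition poly_mat :: "nat \<Rightarrow> 'a::comm_ring_1 poly \<Rightarrow> 'a sqmat \<Rightarrow> 'a sqmat" where
  "poly_mat m g C = (\<lambda>i j. \<Sum>k\<le>degree g. coeff g k * mpow m C k i j)"

definition IntK_T :: "nat \<Rightarrow> 'a::field set \<Rightarrow> 'a poly set" where
  "IntK_T m D = {g. \<forall>C \<in> tri m D. poly_mat m g C \<in> tri m D}"

text \<open>A polynomial f = sum_k F_k x^k in (T_n(K))[x] is given by its coefficient matrices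
  F :: nat => 'a sqmat, with F k = 0 for k > N.
  Right substitution f(C) = sum_k F_k C^k, left substitution f(C)_l = sum_k C^k F_k.\<close>
definition right_subst :: "nat \<Rightarrow> nat \<Rightarrow> (nat \<Rightarrow> 'a::comm_ring_1 sqmat) \<Rightarrow> 'a sqmat \<Rightarrow> 'a sqmat" where
  "right_subst n N F C = (\<lambda>i j. \<Sum>k\<le>N. mmul n (F k) (mpow n C k) i j)"

definition left_subst :: "nat \<Rightarrow> nat \<Rightarrow> (nat \<Rightarrow> 'a::comm_ring_1 sqmat) \<Rightarrow> 'a sqmat \<Rightarrow> 'a sqmat" where
  "left_subst n N F C = (\<lambda>i j. \<Sum>k\<le>N. mmul n (mpow n C k) (F k) i j)"

definition entry_poly :: "nat \<Rightarrow> (nat \<Rightarrow> 'a::comm_ring_1 sqmat) \<Rightarrow> nat \<Rightarrow> nat \<Rightarrow> 'a poly" where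
  "entry_poly N F i j = (\<Sum>k\<le>N. monom (F k i j) k)"

text \<open>D is a subring of the field K (hence an integral domain) whose quotient field is K.\<close>
definition is_domain_with_quotient_field :: "'a::field set \<Rightarrow> bool" where
  "is_domain_with_quotient_field D \<longleftrightarrow>
     0 \<in> D \<and> 1 \<in> D \<and> (\<forall>a\<in>D. \<forall>b\<in>D. a + b \<in> D \<and> a - b \<in> D \<and> a * b \<in> D) \<and>
     (\<forall>x. \<exists>a\<in>D. \<exists>b\<in>D. b \<noteq> 0 \<and> x = a / b)"

end

theory Submission
  imports Defs
begin

lemma tri_UNIV_iff: "A \<in> tri n UNIV \<longleftrightarrow> (\<forall>i j. A i j \<noteq> 0 \<longrightarrow> i \<le> j \<and> j < n)"
  by (simp add: tri_def)

lemma tri_iff: "A \<in> tri n S \<longleftrightarrow> A \<in> tri n UNIV \<and> (\<forall>i j. i \<le> j \<and> j < n \<longrightarrow> A i j \<in> S)"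
  by (auto simp: tri_def)

lemma triD: "A \<in> tri n UNIV \<Longrightarrow> \<not> (i \<le> j \<and> j < n) \<Longrightarrow> A i j = 0"
  by (auto simp: tri_def)

lemma tri_all: "A \<in> tri n D \<Longrightarrow> 0 \<in> D \<Longrightarrow> A i j \<in> D"
  unfolding tri_def by (cases "A i j = 0") auto

lemma tri_sub: "A \<in> tri n D \<Longrightarrow> A \<in> tri n UNIV"
  by (auto simp: tri_def)

lemma mone_tri: "mone n \<in> tri n UNIV" by (auto simp: tri_def mone_def)

lemma sum_nz: "sum f S \<noteq> 0 \<Longrightarrow> \<exists>a\<in>S. f a \<noteq> 0"
  by (rule ccontr) (auto intro: sum.neutral)

lemma mmul_tri:
  assumes "A \<in> tri n UNIV" "B \<in> tri n UNIV"
  shows "mmul n A B \<in> tri n UNIV"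
  unfolding tri_UNIV_iff
proof (intro allI impI)
  fix i j assume "mmul n A B i j \<noteq> 0"
  then obtain l where "A i l * B l j \<noteq> 0" unfolding mmul_def using sum_nz by blast
  then have "A i l \<noteq> 0" "B l j \<noteq> 0" by auto
  then have "i \<le> l" "l \<le> j" "j < n" using assms unfolding tri_UNIV_iff by blast+
  then show "i \<le> j \<and> j < n" by simp
qed

lemma mpow_tri: "A \<in> tri n UNIV \<Longrightarrow> mpow n A k \<in> tri n UNIV"
  by (induction k) (auto intro: mmul_tri mone_tri)

lemma mmul_ut_sum:
  assumes A': "A' \<in> tri n UNIV" and A: "A \<in> tri n UNIV" and "x \<le> y" "y < n"
  shows "mmul n A' A x y = (\<Sum>u=x..y. A' x u * A u y)"
  unfolding mmul_def
proof (rule sum.mono_neutral_right)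
  show "{x..y} \<subseteq> {..<n}" using assms by auto
  show "\<forall>i\<in>{..<n} - {x..y}. A' x i * A i y = 0"
  proof
    fix i assume "i \<in> {..<n} - {x..y}"
    then have "i < x \<or> y < i" by auto
    then show "A' x i * A i y = 0" using triD[OF A', of x i] triD[OF A, of i y] by auto
  qed
qed auto

lemma sum_shift: "(\<Sum>u=(s::nat)+x..s+y. f u) = (\<Sum>u=x..y. f (s+u))"
  by (simp only: add.commute[of s] sum.shift_bounds_cl_nat_ivl)

lemma mpow_window:
  assumes A: "A \<in> tri n UNIV" and B: "B \<in> tri m UNIV" and st: "s + t < n" and rt: "r + t < m"
    and eq: "\<And>x y. x \<le> y \<Longrightarrow> y \<le> t \<Longrightarrow> A (s+x) (s+y) = B (r+x) (r+y)"
  shows "x \<le> y \<Longrightarrow> y \<le> t \<Longrightarrow> mpow n A k (s+x) (s+y) = mpow m B k (r+x) (r+y)"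
proof (induction k arbitrary: x y)
  case 0 then show ?case using st rt by (auto simp: mone_def)
next
  case (Suc k)
  have An: "mpow n A k \<in> tri n UNIV" by (rule mpow_tri[OF A])
  have Bm: "mpow m B k \<in> tri m UNIV" by (rule mpow_tri[OF B])
  have "mpow n A (Suc k) (s+x) (s+y) = (\<Sum>u=s+x..s+y. mpow n A k (s+x) u * A u (s+y))"
    using mmul_ut_sum[OF An A, of "s+x" "s+y"] Suc.prems st by simp
  also have "\<dots> = (\<Sum>u=x..y. mpow n A k (s+x) (s+u) * A (s+u) (s+y))"
    by (rule sum_shift)
  also have "\<dots> = (\<Sum>u=x..y. mpow m B k (r+x) (r+u) * B (r+u) (r+y))"
  proof (rule sum.cong)
    fix u assume "u \<in> {x..y}"
    then show "mpow n A k (s+x) (s+u) * A (s+u) (s+y) = mpow m B k (r+x) (r+u) * B (r+u) (r+y)"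
      using Suc.IH[of x u] eq[of u y] Suc.prems by auto
  qed simp
  also have "\<dots> = (\<Sum>u=r+x..r+y. mpow m B k (r+x) u * B u (r+y))"
    by (rule sum_shift[symmetric])
  also have "\<dots> = mpow m B (Suc k) (r+x) (r+y)"
    using mmul_ut_sum[OF Bm B, of "r+x" "r+y"] Suc.prems rt by simp
  finally show ?case .
qed

lemma poly_mat_window:
  assumes A: "A \<in> tri n UNIV" and B: "B \<in> tri m UNIV" and st: "s + t < n" and rt: "r + t < m"
    and eq: "\<And>x y. x \<le> y \<Longrightarrow> y \<le> t \<Longrightarrow> A (s+x) (s+y) = B (r+x) (r+y)"
    and "x \<le> y" "y \<le> t"
  shows "poly_mat n g A (s+x) (s+y) = poly_mat m g B (r+x) (r+y)"
  unfolding poly_mat_def using mpow_window[OF A B st rt eq, OF _ _ assms(6,7)] by simp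

lemma poly_mat_tri:
  assumes "C \<in> tri n UNIV" shows "poly_mat n g C \<in> tri n UNIV"
  unfolding tri_UNIV_iff
proof (intro allI impI)
  fix i j assume "poly_mat n g C i j \<noteq> 0"
  then obtain k where "coeff g k * mpow n C k i j \<noteq> 0" unfolding poly_mat_def using sum_nz by blast
  then have "mpow n C k i j \<noteq> 0" by auto
  then show "i \<le> j \<and> j < n" using mpow_tri[OF assms, of k] unfolding tri_UNIV_iff by blast
qed

lemma poly_mat_alt:
  assumes "degree g \<le> M"
  shows "poly_mat n g C i j = (\<Sum>k\<le>M. coeff g k * mpow n C k i j)"
  unfolding poly_mat_def
  by (rule sum.mono_neutral_left) (use assms in \<open>auto simp: coeff_eq_0\<close>)

lemma coeff_entry: "coeff (entry_poly N F i j) k = (if k \<le> N then F k i j else 0)"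
  unfolding entry_poly_def by (simp add: coeff_sum coeff_monom)

lemma degree_entry: "degree (entry_poly N F i j) \<le> N"
  by (rule degree_le) (simp add: coeff_entry)

lemma right_eq: "right_subst n N F C i j = (\<Sum>l<n. poly_mat n (entry_poly N F i l) C l j)"
proof -
  have "right_subst n N F C i j = (\<Sum>k\<le>N. \<Sum>l<n. F k i l * mpow n C k l j)"
    by (simp add: right_subst_def mmul_def)
  also have "\<dots> = (\<Sum>l<n. \<Sum>k\<le>N. F k i l * mpow n C k l j)" by (rule sum.swap)
  also have "\<dots> = (\<Sum>l<n. poly_mat n (entry_poly N F i l) C l j)"
    by (simp add: poly_mat_alt[OF degree_entry] coeff_entry)
  finally show ?thesis .
qed

lemma left_eq: "left_subst n N F C i j = (\<Sum>l<n. poly_mat n (entry_poly N F l j) C i l)"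
proof -
  have "left_subst n N F C i j = (\<Sum>k\<le>N. \<Sum>l<n. mpow n C k i l * F k l j)"
    by (simp add: left_subst_def mmul_def)
  also have "\<dots> = (\<Sum>l<n. \<Sum>k\<le>N. mpow n C k i l * F k l j)" by (rule sum.swap)
  also have "\<dots> = (\<Sum>l<n. poly_mat n (entry_poly N F l j) C i l)"
    by (simp add: poly_mat_alt[OF degree_entry] coeff_entry mult.commute)
  finally show ?thesis .
qed

lemma IntK_iff: "g \<in> IntK_T m D \<longleftrightarrow>
   (\<forall>B \<in> tri m D. \<forall>a b. a \<le> b \<and> b < m \<longrightarrow> poly_mat m g B a b \<in> D)"
proof -
  have "poly_mat m g B \<in> tri m D \<longleftrightarrow> (\<forall>a b. a \<le> b \<and> b < m \<longrightarrow> poly_mat m g B a b \<in> D)"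
    if "B \<in> tri m D" for B
    using poly_mat_tri[OF tri_sub[OF that], of g] unfolding tri_iff[of _ m D] by blast
  then show ?thesis unfolding IntK_T_def by blast
qed

lemma IF:
  assumes g: "g \<in> IntK_T m D" and A: "A \<in> tri n D" and D0: "0 \<in> D"
    and st: "s + t < n" and tm: "t < m" and "s \<le> x'" "x' \<le> y'" "y' \<le> s + t"
  shows "poly_mat n g A x' y' \<in> D"
proof -
  define B where "B = (\<lambda>a b. if a \<le> b \<and> b \<le> t then A (s+a) (s+b) else 0)"
  have BD: "B \<in> tri m D" unfolding tri_def B_def using tm st A D0 by (auto intro: tri_all)
  have eq1: "poly_mat n g A (s+(x'-s)) (s+(y'-s)) = poly_mat m g B (0+(x'-s)) (0+(y'-s))"
    by (rule poly_mat_window[OF tri_sub[OF A] tri_sub[OF BD] st]) (use tm assms in \<open>auto simp: B_def\<close>)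
  have "y' - s < m" "x' - s \<le> y' - s" using assms by linarith+
  have all: "\<forall>B\<in>tri m D. \<forall>a b. a \<le> b \<and> b < m \<longrightarrow> poly_mat m g B a b \<in> D"
    using g unfolding IntK_iff .
  have "poly_mat m g B (x'-s) (y'-s) \<in> D"
    using all BD \<open>y' - s < m\<close> \<open>x' - s \<le> y' - s\<close> by simp
  then show ?thesis using eq1 assms by simp
qed

lemma sum_in:
  assumes "\<forall>a\<in>D. \<forall>b\<in>D. a + b \<in> D" "0 \<in> D"
  shows "finite S \<Longrightarrow> (\<forall>x\<in>S. f x \<in> D) \<Longrightarrow> sum f S \<in> D"
  by (induction S rule: finite_induct) (use assms in auto)

lemma extract_in:
  fixes D :: "'a::ab_group_add set"
  assumes add: "\<forall>a\<in>D. \<forall>b\<in>D. a + b \<in> D" and diff: "\<forall>a\<in>D. \<forall>b\<in>D. a - b \<in> D" and D0: "0 \<in> D"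
    and "finite S" "l \<in> S" "sum f S \<in> D" "\<forall>x\<in>S-{l}. f x \<in> D"
  shows "f l \<in> D"
proof -
  have "sum f (S - {l}) \<in> D" using sum_in[OF add D0] assms by auto
  moreover have "f l = sum f S - sum f (S - {l})" using sum.remove[OF assms(4,5), of f] by simp
  ultimately show ?thesis using diff assms(6) by simp
qed

lemma row_zero: "(\<forall>y. C x y = 0) \<Longrightarrow> mpow n C (Suc k) x y = 0"
proof (induction k arbitrary: y)
  case 0
  then show ?case by (auto simp: mmul_def mone_def intro!: sum.neutral)
next
  case (Suc k)
  then show ?case by (auto simp: mmul_def intro!: sum.neutral)
qed

lemma col_zero: "(\<forall>x. C x y = 0) \<Longrightarrow> mpow n C (Suc k) x y = 0"
  by (simp add: mmul_def)

lemma poly_mat_pow0: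
  assumes "\<forall>k. mpow n C (Suc k) x y = 0"
  shows "poly_mat n g C x y = coeff g 0 * mone n x y"
proof -
  have "poly_mat n g C x y = (\<Sum>k\<in>{0}. coeff g k * mpow n C k x y)"
    unfolding poly_mat_def
  proof (rule sum.mono_neutral_right)
    show "\<forall>i\<in>{..degree g} - {0}. coeff g i * mpow n C i x y = 0"
    proof
      fix i assume "i \<in> {..degree g} - {0}"
      then obtain k where "i = Suc k" by (cases i) auto
      then show "coeff g i * mpow n C i x y = 0" using assms by (simp del: mpow.simps)
    qed
  qed auto
  then show ?thesis by simp
qed

lemma entry_zero: "(\<forall>k. F k i j = 0) \<Longrightarrow> entry_poly N F i j = 0"
  by (simp add: entry_poly_def)

lemma poly_mat_zero: "poly_mat n 0 C = (\<lambda>i j. 0)"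
  by (simp add: poly_mat_def)


lemma R_suff:
  assumes D0: "0 \<in> D" and add: "\<forall>a\<in>D. \<forall>b\<in>D. a + b \<in> D" and FT: "\<forall>k. F k \<in> tri n UNIV"
    and H: "\<forall>i j. i \<le> j \<and> j < n \<longrightarrow> entry_poly N F i j \<in> IntK_T (n - j) D"
    and C: "C \<in> tri n D"
  shows "right_subst n N F C \<in> tri n D"
proof -
  have CU: "C \<in> tri n UNIV" using tri_sub[OF C] .
  have T: "right_subst n N F C \<in> tri n UNIV"
    unfolding tri_UNIV_iff
  proof (intro allI impI)
    fix i j assume "right_subst n N F C i j \<noteq> 0"
    then obtain k where "mmul n (F k) (mpow n C k) i j \<noteq> 0"
      unfolding right_subst_def using sum_nz by blast
    then show "i \<le> j \<and> j < n"
      using mmul_tri[OF FT[rule_format] mpow_tri[OF CU]] unfolding tri_UNIV_iff by blast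
  qed
  have "right_subst n N F C i j \<in> D" if ij: "i \<le> j" "j < n" for i j
  proof -
    have "(\<Sum>l<n. poly_mat n (entry_poly N F i l) C l j) \<in> D"
    proof (rule sum_in[OF add D0], simp, intro ballI)
      fix l assume l: "l \<in> {..<n}"
      show "poly_mat n (entry_poly N F i l) C l j \<in> D"
      proof (cases "l < i")
        case True
        then have "entry_poly N F i l = 0"
          by (intro entry_zero allI triD) (use FT True in auto)
        then show ?thesis using D0 by (simp add: poly_mat_zero)
      next
        case False
        show ?thesis
        proof (cases "l \<le> j")
          case True
          have "entry_poly N F i l \<in> IntK_T (n - l) D" using H False True ij by auto
          then show ?thesis by (rule IF[where s=l and t="n - 1 - l"]) (use C D0 True ij l in auto)
        next
          case False
          then show ?thesis using triD[OF poly_mat_tri[OF CU, of "entry_poly N F i l"], of l j] D0 by auto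
        qed
      qed
    qed
    then show ?thesis by (simp add: right_eq)
  qed
  then show ?thesis using T by (auto simp: tri_iff[of _ n D])
qed

lemma L_suff:
  assumes D0: "0 \<in> D" and add: "\<forall>a\<in>D. \<forall>b\<in>D. a + b \<in> D" and FT: "\<forall>k. F k \<in> tri n UNIV"
    and H: "\<forall>i j. i \<le> j \<and> j < n \<longrightarrow> entry_poly N F i j \<in> IntK_T (i + 1) D"
    and C: "C \<in> tri n D"
  shows "left_subst n N F C \<in> tri n D"
proof -
  have CU: "C \<in> tri n UNIV" using tri_sub[OF C] .
  have T: "left_subst n N F C \<in> tri n UNIV"
    unfolding tri_UNIV_iff
  proof (intro allI impI)
    fix i j assume "left_subst n N F C i j \<noteq> 0"
    then obtain k where "mmul n (mpow n C k) (F k) i j \<noteq> 0"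
      unfolding left_subst_def using sum_nz by blast
    then show "i \<le> j \<and> j < n"
      using mmul_tri[OF mpow_tri[OF CU] FT[rule_format]] unfolding tri_UNIV_iff by blast
  qed
  have "left_subst n N F C i j \<in> D" if ij: "i \<le> j" "j < n" for i j
  proof -
    have "(\<Sum>l<n. poly_mat n (entry_poly N F l j) C i l) \<in> D"
    proof (rule sum_in[OF add D0], simp, intro ballI)
      fix l assume l: "l \<in> {..<n}"
      show "poly_mat n (entry_poly N F l j) C i l \<in> D"
      proof (cases "j < l")
        case True
        then have "entry_poly N F l j = 0"
          by (intro entry_zero allI triD) (use FT True in auto)
        then show ?thesis using D0 by (simp add: poly_mat_zero)
      next
        case False
        show ?thesis
        proof (cases "i \<le> l")
          case True
          have "entry_poly N F l j \<in> IntK_T (l + 1) D" using H False True ij by auto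
          then show ?thesis by (rule IF[where s=0 and t=l]) (use C D0 True ij l in auto)
        next
          case False
          then show ?thesis using triD[OF poly_mat_tri[OF CU, of "entry_poly N F l j"], of i l] D0 by auto
        qed
      qed
    qed
    then show ?thesis by (simp add: left_eq)
  qed
  then show ?thesis using T by (auto simp: tri_iff[of _ n D])
qed

lemma R_nec:
  fixes D :: "'a::field set"
  assumes D0: "0 \<in> D" and add: "\<forall>a\<in>D. \<forall>b\<in>D. a + b \<in> D" and diff: "\<forall>a\<in>D. \<forall>b\<in>D. a - b \<in> D"
    and FT: "\<forall>k. F k \<in> tri n UNIV"
    and H: "\<forall>C\<in>tri n D. right_subst n N F C \<in> tri n D"
  shows "i \<le> j \<Longrightarrow> j < n \<Longrightarrow> entry_poly N F i j \<in> IntK_T (n - j) D"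
proof (induction "n - j" arbitrary: i j rule: less_induct)
  case less
  show ?case unfolding IntK_iff
  proof (intro ballI allI impI)
    fix B a b assume B: "B \<in> tri (n - j) D" and ab: "a \<le> b \<and> b < n - j"
    define t where "t = b - a"
    define col where "col = j + t"
    define C where "C = (\<lambda>x y. if j \<le> x \<and> x \<le> y \<and> y \<le> col then B (x - j + a) (y - j + a) else 0)"
    have colm: "col < n" using ab less.prems unfolding col_def t_def by auto
    have CD: "C \<in> tri n D" unfolding tri_def C_def using colm D0 B by (auto intro: tri_all)
    have CU: "C \<in> tri n UNIV" by (rule tri_sub[OF CD])
    define T where "T l = poly_mat n (entry_poly N F i l) C l col" for l
    have "right_subst n N F C \<in> tri n D" using H CD by blast
    then have "right_subst n N F C i col \<in> D" using less.prems colm unfolding tri_def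
      by (auto simp: col_def)
    then have sumD: "sum T {..<n} \<in> D" by (simp add: right_eq T_def)
    have others: "\<forall>l\<in>{..<n} - {j}. T l \<in> D"
    proof
      fix l assume l: "l \<in> {..<n} - {j}"
      show "T l \<in> D"
      proof (cases "l < j")
        case True
        have "\<forall>k. mpow n C (Suc k) l col = 0"
          by (intro allI row_zero) (use True in \<open>auto simp: C_def\<close>)
        then have "T l = coeff (entry_poly N F i l) 0 * mone n l col" unfolding T_def by (rule poly_mat_pow0)
        then show ?thesis using True D0 by (simp add: mone_def col_def)
      next
        case False
        then have jl: "j < l" using l by auto
        show ?thesis
        proof (cases "l \<le> col")
          case True
          have "entry_poly N F i l \<in> IntK_T (n - l) D"
            using less.hyps[of l i] jl l less.prems by auto
          then show ?thesis unfolding T_def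
            by (rule IF[where s=l and t="n - 1 - l"]) (use CD D0 True l colm in auto)
        next
          case False
          then show ?thesis unfolding T_def
            using triD[OF poly_mat_tri[OF CU, of "entry_poly N F i l"], of l col] D0 by auto
        qed
      qed
    qed
    have Tj: "T j \<in> D" by (rule extract_in[OF add diff D0 _ _ sumD others]) (use less.prems in auto)
    have abt: "a + t = b" using ab by (simp add: t_def)
    have e: "poly_mat n (entry_poly N F i j) C (j+0) (j+t) = poly_mat (n - j) (entry_poly N F i j) B (a+0) (a+t)"
      by (rule poly_mat_window[OF CU tri_sub[OF B], where s=j and t=t and r=a]) (use ab colm in \<open>auto simp: C_def col_def t_def add.commute\<close>)
    have "poly_mat (n - j) (entry_poly N F i j) B a b = T j"
      unfolding T_def col_def abt[symmetric] using e by simp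
    then show "poly_mat (n - j) (entry_poly N F i j) B a b \<in> D" using Tj by simp
  qed
qed

lemma L_nec:
  fixes D :: "'a::field set"
  assumes D0: "0 \<in> D" and add: "\<forall>a\<in>D. \<forall>b\<in>D. a + b \<in> D" and diff: "\<forall>a\<in>D. \<forall>b\<in>D. a - b \<in> D"
    and FT: "\<forall>k. F k \<in> tri n UNIV"
    and H: "\<forall>C\<in>tri n D. left_subst n N F C \<in> tri n D"
  shows "l \<le> j \<Longrightarrow> j < n \<Longrightarrow> entry_poly N F l j \<in> IntK_T (l + 1) D"
proof (induction l arbitrary: j rule: less_induct)
  case (less l)
  show ?case unfolding IntK_iff
  proof (intro ballI allI impI)
    fix B a b assume B: "B \<in> tri (l + 1) D" and ab: "a \<le> b \<and> b < l + 1"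
    define t where "t = b - a"
    define r where "r = l - t"
    define C where "C = (\<lambda>x y. if r \<le> x \<and> x \<le> y \<and> y \<le> l then B (x - r + a) (y - r + a) else 0)"
    have rt: "r + t = l" using ab unfolding r_def t_def by auto
    have ln: "l < n" using less.prems by auto
    have CD: "C \<in> tri n D" unfolding tri_def C_def using ln D0 B by (auto intro: tri_all)
    have CU: "C \<in> tri n UNIV" by (rule tri_sub[OF CD])
    define T where "T l' = poly_mat n (entry_poly N F l' j) C r l'" for l'
    have "left_subst n N F C \<in> tri n D" using H CD by blast
    then have "left_subst n N F C r j \<in> D" using less.prems rt unfolding tri_def
      by auto
    then have sumD: "sum T {..<n} \<in> D" by (simp add: left_eq T_def)
    have others: "\<forall>l'\<in>{..<n} - {l}. T l' \<in> D"
    proof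
      fix l' assume l': "l' \<in> {..<n} - {l}"
      show "T l' \<in> D"
      proof (cases "l < l'")
        case True
        have "\<forall>k. mpow n C (Suc k) r l' = 0"
          by (intro allI col_zero) (use True in \<open>auto simp: C_def\<close>)
        then have "T l' = coeff (entry_poly N F l' j) 0 * mone n r l'" unfolding T_def by (rule poly_mat_pow0)
        then show ?thesis using True D0 rt by (simp add: mone_def)
      next
        case False
        then have jl: "l' < l" using l' by auto
        show ?thesis
        proof (cases "r \<le> l'")
          case True
          have "entry_poly N F l' j \<in> IntK_T (l' + 1) D"
            using less.IH[of l' j] jl less.prems by auto
          then show ?thesis unfolding T_def
            by (rule IF[where s=0 and t="l'"]) (use CD D0 True l' in auto)
        next
          case False
          then show ?thesis unfolding T_def
            using triD[OF poly_mat_tri[OF CU, of "entry_poly N F l' j"], of r l'] D0 by auto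
        qed
      qed
    qed
    have Tl: "T l \<in> D" by (rule extract_in[OF add diff D0 _ _ sumD others]) (use ln in auto)
    have abt: "a + t = b" using ab by (simp add: t_def)
    have e: "poly_mat n (entry_poly N F l j) C (r+0) (r+t) = poly_mat (l + 1) (entry_poly N F l j) B (a+0) (a+t)"
      by (rule poly_mat_window[OF CU tri_sub[OF B], where s=r and t=t and r=a]) (use ab rt ln in \<open>auto simp: C_def t_def add.commute\<close>)
    have "poly_mat (l + 1) (entry_poly N F l j) B a b = T l"
      unfolding T_def abt[symmetric] using e rt by simp
    then show "poly_mat (l + 1) (entry_poly N F l j) B a b \<in> D" using Tl by simp
  qed
qed

theorem corollary5p3:
  fixes D :: "'a::field set" and n N :: nat and F :: "nat \<Rightarrow> 'a sqmat"
  assumes "is_domain_with_quotient_field D"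
    and "n \<ge> 1"
    and "\<forall>k. F k \<in> tri n UNIV"
    and "\<forall>k>N. \<forall>i j. F k i j = 0"
  shows "((\<forall>C \<in> tri n D. right_subst n N F C \<in> tri n D) \<longleftrightarrow>
            (\<forall>i j. i \<le> j \<and> j < n \<longrightarrow> entry_poly N F i j \<in> IntK_T (n - j) D))
       \<and> ((\<forall>C \<in> tri n D. left_subst n N F C \<in> tri n D) \<longleftrightarrow>
            (\<forall>i j. i \<le> j \<and> j < n \<longrightarrow> entry_poly N F i j \<in> IntK_T (i + 1) D))"
proof -
  have D0: "0 \<in> D" and add: "\<forall>a\<in>D. \<forall>b\<in>D. a + b \<in> D" and diff: "\<forall>a\<in>D. \<forall>b\<in>D. a - b \<in> D"
    using assms(1) unfolding is_domain_with_quotient_field_def by auto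
  show ?thesis
    using R_suff[OF D0 add assms(3)] L_suff[OF D0 add assms(3)]
      R_nec[OF D0 add diff assms(3)] L_nec[OF D0 add diff assms(3)]
    by blast
qed

end
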